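(* Let $D=\tau_z h$ where $h$ is a Hermitian $2N\times 2N$ matrix and $\tau_z=\mathrm{diag}(\mathbb{1}_N,-\mathbb{1}_N)$, and assume $D$ is diagonalizable with all eigenvalues real. Let $\omega_0>0$ be such that no eigenvalue of $D$ equals $\pm\omega_0$, and let $W_+\subset\mathbb{C}^{2N}$ be the span of the eigenvectors of $D$ with eigenvalues $\omega>\omega_0$, of dimension $M$. Then the eigenvectors spanning $W_+$ may be chosen mutually orthogonal with respect to the symplectic form $\langle x|\tau_z|y\rangle$ and each with nonzero symplectic norm; let $R_+$ (resp. $R_-$) be the number of them with positive (resp. negative) symplectic norm $\langle w|\tau_z|w\rangle$, so $R_++R_-=M$. Then $W_+$ can be uniquely decomposed as a direct sum $W_+=W_{++}\oplus W_{+-}$, where $W_{++}$ and $W_{+-}$ are subspaces of dimensions $R_+$ and $R_-$ respectively, such that for all nonzero $w_+\in W_{++}$ and $w_-\in W_{+-}$: $$\operatorname{sgn}\langle w_\sigma|\tau_z|w_\sigma\rangle=\sigma\ (\sigma=\pm),\qquad \langle w_+|\tau_z|w_-\rangle=0,\qquad \langle w_+|w_-\rangle=0.$$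
   Context: $\langle\cdot|\cdot\rangle$ denotes the standard Hermitian inner product on $\mathbb{C}^{2N}$. In the physical setting, $h=h(\vec k)$ is the Bogoliubov–de Gennes matrix of a quadratic bosonic Hamiltonian at momentum $\vec k$ and $D$ is its dynamical matrix. *)

theory Defs
  imports "HOL-Analysis.Analysis"
begin

text \<open>Vectors in C^{2N} are indexed by the type 'n + 'n, where 'n has N elements:
  Inl i is the i-th of the first N coordinates, Inr i the i-th of the last N.
  Complex linear algebra uses the library interpretation vec of the complex
  vector space (*s) on complex ^ 'm (vec.span, vec.dim, vec.subspace, vec.independent).\<close>

definition tau_z :: "complex ^ ('n::finite + 'n) ^ ('n + 'n)" where
  "tau_z = (\<chi> i j. if i = j then (case i of Inl _ \<Rightarrow> 1 | Inr _ \<Rightarrow> -1) else 0)"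

definition cinner :: "complex ^ 'm::finite \<Rightarrow> complex ^ 'm \<Rightarrow> complex" where
  "cinner x y = (\<Sum>i\<in>UNIV. cnj (x $ i) * y $ i)"

definition sympl :: "complex ^ ('n::finite + 'n) \<Rightarrow> complex ^ ('n + 'n) \<Rightarrow> complex" where
  "sympl x y = cinner x (tau_z *v y)"

definition hermitian_mat :: "complex ^ 'm::finite ^ 'm \<Rightarrow> bool" where
  "hermitian_mat A \<longleftrightarrow> (\<forall>i j. A $ i $ j = cnj (A $ j $ i))"

definition is_eigenvalue :: "complex ^ 'm::finite ^ 'm \<Rightarrow> complex \<Rightarrow> bool" where
  "is_eigenvalue A l \<longleftrightarrow> (\<exists>v. v \<noteq> 0 \<and> A *v v = l *s v)"

definition is_eigenvector :: "complex ^ 'm::finite ^ 'm \<Rightarrow> complex ^ 'm \<Rightarrow> complex \<Rightarrow> bool" where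
  "is_eigenvector A v l \<longleftrightarrow> v \<noteq> 0 \<and> A *v v = l *s v"

definition diagonalizable_mat :: "complex ^ 'm::finite ^ 'm \<Rightarrow> bool" where
  "diagonalizable_mat A \<longleftrightarrow>
     (\<exists>B. vec.independent B \<and> vec.span B = UNIV \<and> (\<forall>v\<in>B. \<exists>l. is_eigenvector A v l))"

end

theory Submission
  imports Defs
begin


definition tsg :: "'n + 'n \<Rightarrow> complex" where
  "tsg i = (case i of Inl _ \<Rightarrow> 1 | Inr _ \<Rightarrow> -1)"

lemma tsg_sq: "tsg i * tsg i = 1" by (cases i) (auto simp: tsg_def)
lemma cnj_tsg[simp]: "cnj (tsg i) = tsg i" by (cases i) (auto simp: tsg_def)

lemma tau_entry: "tau_z $ i $ j = (if i = j then tsg i else 0)"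
  by (simp add: tau_z_def tsg_def)

lemma tau_mult: "(tau_z *v y) $ i = tsg i * y $ i"
proof -
  have "(tau_z *v y) $ i = (\<Sum>j\<in>UNIV. (if i = j then tsg i else 0) * y $ j)"
    by (simp add: matrix_vector_mult_def tau_entry)
  also have "\<dots> = (\<Sum>j\<in>UNIV. if i = j then tsg i * y $ j else 0)"
    by (intro sum.cong) auto
  also have "\<dots> = tsg i * y $ i" by simp
  finally show ?thesis .
qed

lemma tau_tau: "tau_z *v (tau_z *v y) = y"
  by (simp add: vec_eq_iff tau_mult mult.assoc[symmetric] tsg_sq)

lemma cinner_add_right: "cinner x (y + z) = cinner x y + cinner x z"
  by (simp add: cinner_def distrib_left sum.distrib)
lemma cinner_add_left: "cinner (x + y) z = cinner x z + cinner y z"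
  by (simp add: cinner_def distrib_right sum.distrib)
lemma cinner_scale_right: "cinner x (c *s y) = c * cinner x y"
  by (simp add: cinner_def sum_distrib_left mult_ac)
lemma cinner_scale_left: "cinner (c *s x) y = cnj c * cinner x y"
  by (simp add: cinner_def sum_distrib_left mult_ac)
lemma cinner_diff_right: "cinner x (y - z) = cinner x y - cinner x z"
  by (simp add: cinner_def right_diff_distrib sum_subtractf)
lemma cinner_diff_left: "cinner (x - y) z = cinner x z - cinner y z"
  by (simp add: cinner_def left_diff_distrib sum_subtractf)
lemma cinner_zero_left[simp]: "cinner 0 x = 0" by (simp add: cinner_def)
lemma cinner_zero_right[simp]: "cinner x 0 = 0" by (simp add: cinner_def)
lemma cinner_cnj: "cnj (cinner x y) = cinner y x"
  by (simp add: cinner_def mult.commute)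
lemma cinner_self: "cinner x x = complex_of_real ((norm x)^2)"
proof -
  have "cinner x x = (\<Sum>i\<in>UNIV. complex_of_real ((norm (x $ i))^2))"
    unfolding cinner_def by (intro sum.cong refl) (metis complex_norm_square mult.commute of_real_power)
  also have "\<dots> = complex_of_real (\<Sum>i\<in>UNIV. (norm (x $ i))^2)" by simp
  also have "(\<Sum>i\<in>UNIV. (norm (x $ i))^2) = (norm x)^2"
    unfolding norm_vec_def L2_set_def by (simp add: sum_nonneg)
  finally show ?thesis .
qed
lemma cinner_self_eq_0: "cinner x x = 0 \<longleftrightarrow> x = 0"
  by (simp add: cinner_self)

lemma sympl_alt: "sympl x y = (\<Sum>i\<in>UNIV. cnj (x $ i) * tsg i * y $ i)"
  by (simp add: sympl_def cinner_def tau_mult mult_ac)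
lemma sympl_add_right: "sympl x (y + z) = sympl x y + sympl x z"
  by (simp add: sympl_alt distrib_left distrib_right sum.distrib)
lemma sympl_add_left: "sympl (x + y) z = sympl x z + sympl y z"
  by (simp add: sympl_alt distrib_left distrib_right sum.distrib)
lemma sympl_scale_right: "sympl x (c *s y) = c * sympl x y"
  by (simp add: sympl_alt sum_distrib_left mult_ac)
lemma sympl_scale_left: "sympl (c *s x) y = cnj c * sympl x y"
  by (simp add: sympl_alt sum_distrib_left mult_ac)
lemma sympl_diff_right: "sympl x (y - z) = sympl x y - sympl x z"
  by (simp add: sympl_alt right_diff_distrib left_diff_distrib sum_subtractf)
lemma sympl_diff_left: "sympl (x - y) z = sympl x z - sympl y z"
  by (simp add: sympl_alt right_diff_distrib left_diff_distrib sum_subtractf)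
lemma sympl_zero_left[simp]: "sympl 0 x = 0" by (simp add: sympl_alt)
lemma sympl_zero_right[simp]: "sympl x 0 = 0" by (simp add: sympl_alt)
lemma sympl_cnj: "cnj (sympl x y) = sympl y x"
  by (simp add: sympl_alt mult_ac)
lemma sympl_self_real: "sympl x x = complex_of_real (Re (sympl x x))"
  using sympl_cnj[of x x] by (simp add: complex_eq_iff)

lemma scaleR_eq_scale: "(r::real) *\<^sub>R (x::complex^'m) = complex_of_real r *s x"
  apply (subst vec_eq_iff, rule allI) apply (subst vector_scaleR_component) by (simp add: scaleR_conv_of_real)

lemma herm_adj:
  assumes "hermitian_mat h"
  shows "cinner (h *v x) y = cinner x (h *v y)"
proof -
  have "cinner (h *v x) y = (\<Sum>i\<in>UNIV. \<Sum>j\<in>UNIV. cnj (h$i$j) * cnj (x$j) * y$i)"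
    by (simp add: cinner_def matrix_vector_mult_def sum_distrib_right sum_distrib_left mult_ac)
  also have "\<dots> = (\<Sum>i\<in>UNIV. \<Sum>j\<in>UNIV. cnj (x$j) * (h$j$i * y$i))"
    using assms unfolding hermitian_mat_def
    by (intro sum.cong refl) (metis complex_cnj_cnj mult.commute mult.left_commute)
  also have "\<dots> = (\<Sum>j\<in>UNIV. \<Sum>i\<in>UNIV. cnj (x$j) * (h$j$i * y$i))"
    by (rule sum.swap)
  also have "\<dots> = cinner x (h *v y)"
    by (simp add: cinner_def matrix_vector_mult_def sum_distrib_left)
  finally show ?thesis .
qed

lemma tau_adj: "cinner (tau_z *v x) y = cinner x (tau_z *v y)"
  by (simp add: cinner_def tau_mult mult_ac)




lemma sympl_span_right:
  assumes "\<And>y. y \<in> A \<Longrightarrow> sympl x y = 0" "y \<in> vec.span A"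
  shows "sympl x y = 0"
  using assms(2) by (induct rule: vec.span_induct_alt) (auto simp: sympl_add_right sympl_scale_right assms(1))

lemma sympl_span_left:
  assumes "\<And>x. x \<in> A \<Longrightarrow> sympl x y = 0" "x \<in> vec.span A"
  shows "sympl x y = 0"
  using assms(2) by (induct rule: vec.span_induct_alt) (auto simp: sympl_add_left sympl_scale_left assms(1))

lemma cinner_span_right:
  assumes "\<And>y. y \<in> A \<Longrightarrow> cinner x y = 0" "y \<in> vec.span A"
  shows "cinner x y = 0"
  using assms(2) by (induct rule: vec.span_induct_alt) (auto simp: cinner_add_right cinner_scale_right assms(1))

lemma cinner_span_left:
  assumes "\<And>x. x \<in> A \<Longrightarrow> cinner x y = 0" "x \<in> vec.span A"
  shows "cinner x y = 0"
  using assms(2) by (induct rule: vec.span_induct_alt) (auto simp: cinner_add_left cinner_scale_left assms(1))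

lemma sympl_span_both:
  assumes "\<And>x y. x \<in> A \<Longrightarrow> y \<in> C \<Longrightarrow> sympl x y = 0" "x \<in> vec.span A" "y \<in> vec.span C"
  shows "sympl x y = 0"
  by (rule sympl_span_left[OF _ assms(2)], rule sympl_span_right[OF _ assms(3)]) (use assms(1) in auto)

lemma cinner_span_both:
  assumes "\<And>x y. x \<in> A \<Longrightarrow> y \<in> C \<Longrightarrow> cinner x y = 0" "x \<in> vec.span A" "y \<in> vec.span C"
  shows "cinner x y = 0"
  by (rule cinner_span_left[OF _ assms(2)], rule cinner_span_right[OF _ assms(3)]) (use assms(1) in auto)

lemma sympl_orth_indep:
  assumes "\<forall>x\<in>B. \<forall>y\<in>B. x \<noteq> y \<longrightarrow> sympl x y = 0" "\<forall>b\<in>B. sympl b b \<noteq> 0"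
  shows "vec.independent B"
proof
  assume "vec.dependent B"
  then obtain a where a: "a \<in> B" "a \<in> vec.span (B - {a})" unfolding vec.dependent_def by blast
  have "sympl a a = 0"
    by (rule sympl_span_right[OF _ a(2)]) (use assms(1) a(1) in auto)
  with assms(2) a(1) show False by auto
qed

lemma cinner_orth_indep:
  assumes "\<forall>x\<in>B. \<forall>y\<in>B. x \<noteq> y \<longrightarrow> cinner x y = 0" "\<forall>b\<in>B. b \<noteq> 0"
  shows "vec.independent B"
proof
  assume "vec.dependent B"
  then obtain a where a: "a \<in> B" "a \<in> vec.span (B - {a})" unfolding vec.dependent_def by blast
  have "cinner a a = 0"
    by (rule cinner_span_right[OF _ a(2)]) (use assms(1) a(1) in auto)
  with assms(2) a(1) show False by (simp add: cinner_self_eq_0)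
qed

lemma sympl_sum_left: "sympl (\<Sum>e\<in>F. f e) y = (\<Sum>e\<in>F. sympl (f e) y)"
  by (induct F rule: infinite_finite_induct) (auto simp: sympl_add_left)
lemma sympl_sum_right: "sympl y (\<Sum>e\<in>F. f e) = (\<Sum>e\<in>F. sympl y (f e))"
  by (induct F rule: infinite_finite_induct) (auto simp: sympl_add_right)

lemma sympl_expand:
  assumes "finite F" "\<forall>x\<in>F. \<forall>y\<in>F. x \<noteq> y \<longrightarrow> sympl x y = 0"
  shows "sympl (\<Sum>e\<in>F. c e *s e) (\<Sum>e\<in>F. c e *s e) = (\<Sum>e\<in>F. cnj (c e) * c e * sympl e e)"
proof -
  have "sympl (\<Sum>e\<in>F. c e *s e) (\<Sum>e\<in>F. c e *s e) = (\<Sum>e\<in>F. \<Sum>f\<in>F. cnj (c e) * c f * sympl e f)"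
    unfolding sympl_sum_left sympl_sum_right sympl_scale_left sympl_scale_right
    by (subst sum.swap) (simp add: sum_distrib_left mult_ac)
  also have "\<dots> = (\<Sum>e\<in>F. \<Sum>f\<in>F. if f = e then cnj (c e) * c e * sympl e e else 0)"
    using assms(2) by (intro sum.cong refl) auto
  also have "\<dots> = (\<Sum>e\<in>F. cnj (c e) * c e * sympl e e)"
    using assms(1) by simp
  finally show ?thesis .
qed

lemma sympl_definite:
  fixes \<sigma> :: real
  assumes "finite F" "\<forall>x\<in>F. \<forall>y\<in>F. x \<noteq> y \<longrightarrow> sympl x y = 0"
    "\<forall>e\<in>F. \<sigma> * Re (sympl e e) > 0" "x \<in> vec.span F" "x \<noteq> 0"
  shows "\<sigma> * Re (sympl x x) > 0"
proof -
  obtain c where x: "x = (\<Sum>e\<in>F. c e *s e)"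
    using assms(4) vec.span_finite[OF assms(1)] by auto
  have "\<sigma> * Re (sympl x x) = (\<Sum>e\<in>F. (cmod (c e))^2 * (\<sigma> * Re (sympl e e)))"
    unfolding x sympl_expand[OF assms(1,2)] Re_sum sum_distrib_left
    by (intro sum.cong refl) (simp add: complex_norm_square[symmetric] mult_ac del: of_real_power)
  moreover have "\<dots> \<ge> 0" using assms(3) by (intro sum_nonneg) (simp add: less_imp_le)
  moreover have "(\<Sum>e\<in>F. (cmod (c e))^2 * (\<sigma> * Re (sympl e e))) \<noteq> 0"
  proof
    assume "(\<Sum>e\<in>F. (cmod (c e))^2 * (\<sigma> * Re (sympl e e))) = 0"
    then have "\<forall>e\<in>F. (cmod (c e))^2 * (\<sigma> * Re (sympl e e)) = 0"
      using assms(1,3) by (subst (asm) sum_nonneg_eq_0_iff) (auto simp: less_imp_le)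
    then have "\<forall>e\<in>F. c e = 0" using assms(3) by (metis less_irrefl mult_eq_0_iff norm_eq_zero power_eq_0_iff)
    then have "x = 0" unfolding x by simp
    with assms(5) show False by simp
  qed
  ultimately show ?thesis by linarith
qed

lemma sgn_sympl: "sgn (sympl x x) = complex_of_real (sgn (Re (sympl x x)))"
  by (subst sympl_self_real) (simp add: sgn_of_real)

lemma sgn_sympl_pos: "sgn (sympl x x) = 1 \<longleftrightarrow> Re (sympl x x) > 0"
  unfolding sgn_sympl by (simp add: sgn_real_def)

lemma sgn_sympl_neg: "sgn (sympl x x) = -1 \<longleftrightarrow> Re (sympl x x) < 0"
  unfolding sgn_sympl by (auto simp: sgn_real_def)

lemma sympl_nz: "sympl x x \<noteq> 0 \<longleftrightarrow> Re (sympl x x) \<noteq> 0"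
  by (subst sympl_self_real) simp




lemma vec_subspace_real:
  fixes U :: "(complex^'m::finite) set"
  assumes "vec.subspace U" shows "subspace U"
  using assms unfolding vec.subspace_def subspace_def by (simp add: scaleR_eq_scale)

lemma sympl_self_Im: "Im (sympl x x) = 0"
  by (subst sympl_self_real) simp
lemma cinner_self_Im: "Im (cinner x x) = 0"
  by (subst cinner_self) (simp del: of_real_power add: of_real_power[symmetric])

lemma cont_nth: "continuous_on S (\<lambda>v::'a::real_normed_vector^'m. v $ i)"
  by (rule linear_continuous_on[OF bounded_linear_vec_nth])

lemma cont_sympl: "continuous_on S (\<lambda>v. Re (sympl v v))"
  unfolding sympl_alt by (intro continuous_intros cont_nth)

lemma rayleigh:
  fixes U :: "(complex^('n::finite+'n)) set"
  assumes sub: "vec.subspace U" and nz: "U \<noteq> {0}"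
  shows "\<exists>u\<in>U. cinner u u = 1 \<and> (\<exists>l::real. \<forall>z\<in>U. sympl z u = of_real l * cinner z u)"
proof -
  define K where "K = U \<inter> sphere 0 1"
  have "closed U" using closed_subspace vec_subspace_real[OF sub] by blast
  then have cK: "compact K" unfolding K_def by (intro closed_Int_compact compact_sphere)
  obtain x0 where x0: "x0 \<in> U" "x0 \<noteq> 0" using nz vec.subspace_0[OF sub] by blast
  have "(1 / norm x0) *\<^sub>R x0 \<in> U" using x0 by (simp add: scaleR_eq_scale vec.subspace_scale[OF sub])
  moreover have "norm ((1 / norm x0) *\<^sub>R x0) = 1" using x0 by simp
  ultimately have "(1 / norm x0) *\<^sub>R x0 \<in> K" unfolding K_def by simp
  then have neK: "K \<noteq> {}" by auto
  obtain u where u: "u \<in> K" "\<And>y. y \<in> K \<Longrightarrow> Re (sympl y y) \<le> Re (sympl u u)"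
    using continuous_attains_sup[OF cK neK cont_sympl] by blast
  define l where "l = Re (sympl u u)"
  have uU: "u \<in> U" and nu: "norm u = 1" using u(1) unfolding K_def by auto
  have uu: "cinner u u = 1" using nu by (simp add: cinner_self)
  have suu: "sympl u u = of_real l" unfolding l_def by (rule sympl_self_real)
  have bound: "Re (sympl v v) \<le> l * (norm v)^2" if "v \<in> U" for v
  proof (cases "v = 0")
    case True then show ?thesis by simp
  next
    case False
    define w where "w = complex_of_real (1 / norm v) *s v"
    have "w \<in> U" unfolding w_def using that by (simp add: vec.subspace_scale[OF sub])
    moreover have "norm w = 1" unfolding w_def scaleR_eq_scale[symmetric] using False by simp
    ultimately have "w \<in> K" unfolding K_def by simp
    then have "Re (sympl w w) \<le> l" using u(2) l_def by blast
    moreover have "Re (sympl w w) = Re (sympl v v) / (norm v)^2"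
      unfolding w_def sympl_scale_left sympl_scale_right by (simp add: power2_eq_square)
    ultimately show ?thesis using False by (simp add: divide_le_eq)
  qed
  have key: "of_real l * cinner u x - sympl u x = 0" if xU: "x \<in> U" for x
  proof (rule ccontr)
    define q where "q = of_real l * cinner u x - sympl u x"
    assume "of_real l * cinner u x - sympl u x \<noteq> 0"
    then have qnz: "q \<noteq> 0" unfolding q_def .
    define a where "a = (cmod q)^2"
    have apos: "a > 0" unfolding a_def using qnz by simp
    define r where "r = Re (of_real l * cinner x x - sympl x x)"
    have rr: "of_real l * cinner x x - sympl x x = of_real r"
      unfolding r_def by (simp add: complex_eq_iff cinner_self_Im sympl_self_Im)
    have qc: "cnj q = of_real l * cinner x u - sympl x u"
      unfolding q_def by (simp add: cinner_cnj sympl_cnj)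
    define t where "t = 1 / (\<bar>r\<bar> + 1)"
    have tpos: "t > 0" unfolding t_def by (simp add: add_pos_nonneg)
    have tr: "t * r < 1" unfolding t_def
      by (simp add: divide_less_eq) (smt (verit))
    define s where "s = - (of_real t * cnj q)"
    define v where "v = u + s *s x"
    have vU: "v \<in> U" unfolding v_def using uU xU
      by (intro vec.subspace_add[OF sub] vec.subspace_scale[OF sub])
    have expand: "of_real l * cinner v v - sympl v v
        = (of_real l * cinner u u - sympl u u) + s * q + cnj s * cnj q
          + cnj s * s * (of_real l * cinner x x - sympl x x)"
      unfolding v_def qc q_def
      by (simp add: cinner_add_left cinner_add_right cinner_scale_left cinner_scale_right
          sympl_add_left sympl_add_right sympl_scale_left sympl_scale_right algebra_simps cinner_cnj sympl_cnj)
    have sq: "s * q = - of_real (t * a)"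
      unfolding s_def a_def by (simp add: mult_ac flip: complex_norm_square)
    have ss: "cnj s * s = of_real (t * t * a)"
      unfolding s_def a_def by (simp add: mult_ac flip: complex_norm_square)
    have "of_real l * cinner v v - sympl v v = of_real (- 2 * t * a + t * t * a * r)"
      unfolding expand uu suu rr ss
      using sq by (simp add: complex_cnj_mult[symmetric])
    moreover have "Re (of_real l * cinner v v - sympl v v) \<ge> 0"
      using bound[OF vU] by (simp add: cinner_self)
    ultimately have "- 2 * t * a + t * t * a * r \<ge> 0" by simp
    then have "t * a * (t * r - 2) \<ge> 0" by (simp add: algebra_simps)
    moreover have "t * a > 0" using tpos apos by simp
    ultimately have "t * r - 2 \<ge> 0" by (simp add: zero_le_mult_iff)
    with tr show False by simp
  qed
  have "\<forall>z\<in>U. sympl z u = of_real l * cinner z u"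
  proof
    fix z assume "z \<in> U"
    from arg_cong[OF key[OF this], of cnj] show "sympl z u = of_real l * cinner z u"
      by (simp add: cinner_cnj sympl_cnj)
  qed
  with uU uu show ?thesis by blast
qed




definition good_basis where
  "good_basis U E \<longleftrightarrow> finite E \<and> E \<subseteq> U \<and> vec.span E = U \<and> (\<forall>e\<in>E. e \<noteq> 0)
     \<and> (\<forall>e\<in>E. \<forall>f\<in>E. e \<noteq> f \<longrightarrow> cinner e f = 0)
     \<and> (\<forall>e\<in>E. \<exists>l::real. \<forall>z\<in>U. sympl z e = of_real l * cinner z e)"

lemma spectral:
  fixes U :: "(complex^('n::finite+'n)) set"
  assumes "vec.subspace U"
  shows "\<exists>E. good_basis U E"
proof -
  have "\<forall>U::(complex^('n::finite+'n)) set. vec.subspace U \<longrightarrow> vec.dim U = n \<longrightarrow> (\<exists>E. good_basis U E)" for n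
  proof (induct n rule: less_induct)
    case (less n)
    show ?case
    proof (intro allI impI)
      fix U :: "(complex^('n::finite+'n)) set"
      assume sub: "vec.subspace U" and dimU: "vec.dim U = n"
      show "\<exists>E. good_basis U E"
      proof (cases "U = {0}")
        case True
        then show ?thesis unfolding good_basis_def by (intro exI[of _ "{}"]) auto
      next
        case False
        obtain u l where u: "u \<in> U" "cinner u u = 1" "\<And>z. z \<in> U \<Longrightarrow> sympl z u = of_real l * cinner z u"
          using rayleigh[OF sub False] by blast
        define U' where "U' = {x\<in>U. cinner u x = 0}"
        have sub': "vec.subspace U'" using sub unfolding U'_def vec.subspace_def
          by (auto simp: cinner_add_right cinner_scale_right)
        have "u \<notin> U'" using u unfolding U'_def by auto
        then have "U' \<subset> U" using u unfolding U'_def by blast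
        moreover have "vec.span U = U" "vec.span U' = U'" using sub sub' by (metis vec.span_eq_iff)+
        ultimately have "vec.span U' \<subset> vec.span U" by metis
        then have "vec.dim U' < n" using vec.dim_psubset dimU by blast
        then obtain E' where E': "good_basis U' E'" using less sub' by blast
        define E where "E = insert u E'"
        have decomp: "x - cinner u x *s u \<in> U'" if "x \<in> U" for x
          unfolding U'_def using that u
          by (auto simp: cinner_diff_right cinner_scale_right
              intro!: vec.subspace_diff[OF sub] vec.subspace_scale[OF sub])
        have "good_basis U E" unfolding good_basis_def
        proof (intro conjI)
          show "finite E" using E' unfolding E_def good_basis_def by auto
          show "E \<subseteq> U" using E' u unfolding E_def good_basis_def U'_def by auto
          then show "vec.span E = U"
          proof (intro antisym)
            show "vec.span E \<subseteq> U" using \<open>E \<subseteq> U\<close> sub by (simp add: vec.span_minimal)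
            show "U \<subseteq> vec.span E"
            proof
              fix x assume "x \<in> U"
              have "x - cinner u x *s u \<in> vec.span E'" using decomp[OF \<open>x \<in> U\<close>] E'
                unfolding good_basis_def by auto
              then have "x - cinner u x *s u \<in> vec.span E" unfolding E_def
                using vec.span_mono[of E' "insert u E'"] by blast
              moreover have "cinner u x *s u \<in> vec.span E" unfolding E_def
                by (intro vec.span_scale vec.span_base) simp
              ultimately have "(x - cinner u x *s u) + cinner u x *s u \<in> vec.span E"
                by (rule vec.span_add)
              then show "x \<in> vec.span E" by simp
            qed
          qed
          show "\<forall>e\<in>E. e \<noteq> 0" using E' u unfolding E_def good_basis_def by auto
          show "\<forall>e\<in>E. \<forall>f\<in>E. e \<noteq> f \<longrightarrow> cinner e f = 0"
          proof (intro ballI impI)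
            fix e f assume "e \<in> E" "f \<in> E" "e \<noteq> f"
            have a: "cinner u g = 0" if "g \<in> E'" for g using E' that unfolding good_basis_def U'_def by auto
            have b: "cinner g u = 0" if "g \<in> E'" for g using a[OF that] cinner_cnj[of u g] by simp
            show "cinner e f = 0"
              using \<open>e \<in> E\<close> \<open>f \<in> E\<close> \<open>e \<noteq> f\<close> a b E' unfolding E_def good_basis_def by auto
          qed
          show "\<forall>e\<in>E. \<exists>l::real. \<forall>z\<in>U. sympl z e = of_real l * cinner z e"
          proof
            fix e assume "e \<in> E"
            show "\<exists>l::real. \<forall>z\<in>U. sympl z e = of_real l * cinner z e"
            proof (cases "e = u")
              case True then show ?thesis using u by blast
            next
              case False
              then have eE': "e \<in> E'" using \<open>e \<in> E\<close> unfolding E_def by auto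
              then obtain le where le: "\<And>z. z \<in> U' \<Longrightarrow> sympl z e = of_real le * cinner z e"
                using E' unfolding good_basis_def by blast
              have eU': "e \<in> U'" using E' eE' unfolding good_basis_def by auto
              then have ue: "cinner u e = 0" and eU: "e \<in> U" unfolding U'_def by auto
              have "sympl e u = 0" using u(3)[OF eU] ue cinner_cnj[of u e] by simp
              then have sue: "sympl u e = 0" using sympl_cnj[of e u] by simp
              have "sympl z e = of_real le * cinner z e" if "z \<in> U" for z
              proof -
                define z' where "z' = z - cinner u z *s u"
                have zz: "z = z' + cinner u z *s u" unfolding z'_def by simp
                have "z' \<in> U'" unfolding z'_def using decomp[OF that] .
                then show ?thesis
                  by (subst (1 2) zz) (simp add: sympl_add_left cinner_add_left sympl_scale_left
                      cinner_scale_left sue ue le)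
              qed
              then show ?thesis by blast
            qed
          qed
        qed
        then show ?thesis by blast
      qed
    qed
  qed
  then show ?thesis using assms by blast
qed




lemma orth_nondeg:
  assumes fin: "finite B" and orth: "\<forall>x\<in>B. \<forall>y\<in>B. x \<noteq> y \<longrightarrow> sympl x y = 0"
    and nz: "\<forall>b\<in>B. sympl b b \<noteq> 0" and x: "x \<in> vec.span B" and z: "\<forall>b\<in>B. sympl b x = 0"
  shows "x = 0"
proof -
  obtain c where xc: "x = (\<Sum>e\<in>B. c e *s e)" using x vec.span_finite[OF fin] by auto
  have "c b = 0" if "b \<in> B" for b
  proof -
    have "sympl b x = (\<Sum>e\<in>B. c e * sympl b e)"
      unfolding xc sympl_sum_right sympl_scale_right ..
    also have "\<dots> = (\<Sum>e\<in>B. if e = b then c b * sympl b b else 0)"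
      using orth that by (intro sum.cong refl) auto
    also have "\<dots> = c b * sympl b b" using fin that by simp
    finally show ?thesis using z nz that by simp
  qed
  then show ?thesis unfolding xc by simp
qed

lemma pencil_mem:
  fixes \<sigma> :: real
  assumes split: "e = p + m" and pX: "p \<in> X" and mY: "m \<in> Y"
    and XW: "X \<subseteq> W"
    and posX: "\<forall>x\<in>X. x \<noteq> 0 \<longrightarrow> \<sigma> * Re (sympl x x) > 0"
    and orthXY: "\<forall>x\<in>X. \<forall>y\<in>Y. x \<noteq> 0 \<longrightarrow> y \<noteq> 0 \<longrightarrow> sympl x y = 0 \<and> cinner x y = 0"
    and pen: "\<forall>z\<in>W. sympl z e = of_real l * cinner z e"
    and neg: "\<sigma> * Re (sympl e e) < 0" and enz: "e \<noteq> 0" and eW: "e \<in> W"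
  shows "p = 0"
proof (rule ccontr)
  assume pnz: "p \<noteq> 0"
  have pm: "sympl p m = 0 \<and> cinner p m = 0"
    using orthXY pX mY pnz by (cases "m = 0") auto
  have "sympl p e = sympl p p" "cinner p e = cinner p p"
    using pm unfolding split by (simp_all add: sympl_add_right cinner_add_right)
  moreover have "p \<in> W" using pX XW by auto
  ultimately have pp: "sympl p p = of_real l * cinner p p" using pen by metis
  have ee: "sympl e e = of_real l * cinner e e" using pen eW by blast
  have "\<sigma> * (l * (norm e)^2) < 0" using neg ee by (simp add: cinner_self)
  moreover have "Re (sympl p p) = l * (norm p)^2" using pp unfolding cinner_self of_real_mult[symmetric]
    by (metis Re_complex_of_real)
  then have "\<sigma> * (l * (norm p)^2) > 0" using posX pX pnz by metis
  ultimately show False using enz pnz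
    by (smt (verit, ccfv_SIG) mult_pos_pos mult_neg_pos mult.assoc mult.left_commute zero_less_norm_iff zero_less_power)
qed




lemma part2:
  fixes B :: "(complex^('n::finite+'n)) set"
  assumes indep: "vec.independent B" and spB: "vec.span B = Wp"
    and orth: "\<forall>x\<in>B. \<forall>y\<in>B. x \<noteq> y \<longrightarrow> sympl x y = 0" and nz: "\<forall>b\<in>B. sympl b b \<noteq> 0"
  shows "let Rp = card {b\<in>B. sgn (sympl b b) = 1};
             Rm = card {b\<in>B. sgn (sympl b b) = -1}
         in Rp + Rm = vec.dim Wp
            \<and> (\<exists>!(Wpp, Wpm). vec.subspace Wpp \<and> vec.subspace Wpm
                  \<and> Wpp \<inter> Wpm = {0}
                  \<and> {a + b | a b. a \<in> Wpp \<and> b \<in> Wpm} = Wp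
                  \<and> vec.dim Wpp = Rp \<and> vec.dim Wpm = Rm
                  \<and> (\<forall>w\<in>Wpp. w \<noteq> 0 \<longrightarrow> sgn (sympl w w) = 1)
                  \<and> (\<forall>w\<in>Wpm. w \<noteq> 0 \<longrightarrow> sgn (sympl w w) = -1)
                  \<and> (\<forall>wp\<in>Wpp. \<forall>wm\<in>Wpm. wp \<noteq> 0 \<longrightarrow> wm \<noteq> 0 \<longrightarrow>
                        sympl wp wm = 0 \<and> cinner wp wm = 0))"
proof -
  define Bp where "Bp = {b\<in>B. sgn (sympl b b) = 1}"
  define Bm where "Bm = {b\<in>B. sgn (sympl b b) = -1}"
  have finB: "finite B" using indep vec.independent_bound_general by blast
  have cardB: "card B = vec.dim Wp" using vec.dim_span_eq_card_independent[OF indep] spB by simp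
  have BpBm1: "b \<in> Bp \<or> b \<in> Bm" if "b \<in> B" for b
  proof -
    have "Re (sympl b b) \<noteq> 0" using nz that sympl_nz by blast
    then have "Re (sympl b b) > 0 \<or> Re (sympl b b) < 0" by linarith
    then show ?thesis unfolding Bp_def Bm_def using that sgn_sympl_pos[of b] sgn_sympl_neg[of b] by blast
  qed
  have BpBm: "B = Bp \<union> Bm" using BpBm1 unfolding Bp_def Bm_def by blast
  have disj: "Bp \<inter> Bm = {}" unfolding Bp_def Bm_def by auto
  have finBp: "finite Bp" "finite Bm" using finB BpBm by auto
  have card_sum: "card Bp + card Bm = vec.dim Wp"
    using card_Un_disjoint[OF finBp disj] BpBm cardB by simp
  have subW: "vec.subspace Wp" using spB vec.subspace_span by blast
  obtain E where E: "good_basis Wp E" using spectral[OF subW] by blast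
  have finE: "finite E" and EW: "E \<subseteq> Wp" and spE: "vec.span E = Wp" and Enz: "\<forall>e\<in>E. e \<noteq> 0"
    and Eorth: "\<forall>e\<in>E. \<forall>f\<in>E. e \<noteq> f \<longrightarrow> cinner e f = 0"
    and Epen: "\<forall>e\<in>E. \<exists>l::real. \<forall>z\<in>Wp. sympl z e = of_real l * cinner z e"
    using E unfolding good_basis_def by auto
  have EorthS: "\<forall>e\<in>E. \<forall>f\<in>E. e \<noteq> f \<longrightarrow> sympl e f = 0"
  proof (intro ballI impI)
    fix e f assume "e \<in> E" "f \<in> E" "e \<noteq> f"
    obtain l where "\<forall>z\<in>Wp. sympl z f = of_real l * cinner z f" using Epen \<open>f \<in> E\<close> by blast
    moreover have "e \<in> Wp" using EW \<open>e \<in> E\<close> by blast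
    moreover have "cinner e f = 0" using Eorth \<open>e \<in> E\<close> \<open>f \<in> E\<close> \<open>e \<noteq> f\<close> by blast
    ultimately show "sympl e f = 0" by simp
  qed
  have Esnz: "sympl e e \<noteq> 0" if eE: "e \<in> E" for e
  proof
    assume see: "sympl e e = 0"
    obtain l where l: "\<forall>z\<in>Wp. sympl z e = of_real l * cinner z e" using bspec[OF Epen eE] by (elim exE)
    have "e \<noteq> 0" using bspec[OF Enz eE] .
    then have "cinner e e \<noteq> 0" unfolding cinner_self_eq_0 .
    have eW: "e \<in> Wp" using EW eE by (rule subsetD)
    have "sympl e e = of_real l * cinner e e" using l eW by (rule bspec)
    then have "of_real l * cinner e e = 0" using see by simp
    then have l0: "l = 0" using \<open>cinner e e \<noteq> 0\<close> by simp
    have BWp: "B \<subseteq> Wp" using vec.span_superset[of B] unfolding spB .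
    have "sympl b e = 0" if "b \<in> B" for b
    proof -
      have "b \<in> Wp" using that BWp by blast
      then have "sympl b e = of_real l * cinner b e" using l by blast
      then show ?thesis using l0 by simp
    qed
    moreover have "e \<in> vec.span B" using eW unfolding spB .
    ultimately have "e = 0" using orth_nondeg[OF finB orth nz, of e] by blast
    then show False using Enz eE by blast
  qed
  define Ep where "Ep = {e\<in>E. Re (sympl e e) > 0}"
  define Em where "Em = {e\<in>E. Re (sympl e e) < 0}"
  define P where "P = vec.span Ep"
  define M where "M = vec.span Em"
  have EpEm1: "e \<in> Ep \<or> e \<in> Em" if "e \<in> E" for e
  proof -
    have "Re (sympl e e) \<noteq> 0" using Esnz[OF that] sympl_nz by blast
    then show ?thesis unfolding Ep_def Em_def using that by auto
  qed
  have EpEm: "E = Ep \<union> Em" using EpEm1 unfolding Ep_def Em_def by blast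
  have finEp: "finite Ep" "finite Em" using finE unfolding Ep_def Em_def by auto
  have orthEp: "\<forall>x\<in>Ep. \<forall>y\<in>Ep. x \<noteq> y \<longrightarrow> sympl x y = 0" using EorthS unfolding Ep_def by auto
  have orthEm: "\<forall>x\<in>Em. \<forall>y\<in>Em. x \<noteq> y \<longrightarrow> sympl x y = 0" using EorthS unfolding Em_def by auto
  have orthBp: "\<forall>x\<in>Bp. \<forall>y\<in>Bp. x \<noteq> y \<longrightarrow> sympl x y = 0" using orth unfolding Bp_def by auto
  have orthBm: "\<forall>x\<in>Bm. \<forall>y\<in>Bm. x \<noteq> y \<longrightarrow> sympl x y = 0" using orth unfolding Bm_def by auto
  have Ep1: "\<forall>e\<in>Ep. 1 * Re (sympl e e) > 0" unfolding Ep_def by simp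
  have Em1: "\<forall>e\<in>Em. -1 * Re (sympl e e) > 0" unfolding Em_def by simp
  have Bp1: "\<forall>e\<in>Bp. 1 * Re (sympl e e) > 0" unfolding Bp_def by (simp add: sgn_sympl_pos)
  have Bm1: "\<forall>e\<in>Bm. -1 * Re (sympl e e) > 0" unfolding Bm_def by (simp add: sgn_sympl_neg)
  have posP: "Re (sympl x x) > 0" if "x \<in> P" "x \<noteq> 0" for x
    using sympl_definite[OF finEp(1) orthEp Ep1, of x] that unfolding P_def by simp
  have negM: "Re (sympl x x) < 0" if "x \<in> M" "x \<noteq> 0" for x
    using sympl_definite[OF finEp(2) orthEm Em1, of x] that unfolding M_def by simp
  have posBp: "Re (sympl x x) > 0" if "x \<in> vec.span Bp" "x \<noteq> 0" for x
    using sympl_definite[OF finBp(1) orthBp Bp1, of x] that by simp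
  have negBm: "Re (sympl x x) < 0" if "x \<in> vec.span Bm" "x \<noteq> 0" for x
    using sympl_definite[OF finBp(2) orthBm Bm1, of x] that by simp
  have subP: "vec.subspace P" and subM: "vec.subspace M" unfolding P_def M_def by auto
  have PM0: "P \<inter> M = {0}"
  proof -
    have "x = 0" if "x \<in> P" "x \<in> M" for x
    proof (rule ccontr)
      assume "x \<noteq> 0"
      with posP[OF that(1)] negM[OF that(2)] show False by simp
    qed
    then show ?thesis using vec.subspace_0[OF subP] vec.subspace_0[OF subM] by blast
  qed
  have sumPM: "{a + b | a b. a \<in> P \<and> b \<in> M} = Wp"
    unfolding P_def M_def vec.span_Un[symmetric] EpEm[symmetric] spE ..
  have EpE: "Ep \<subseteq> E" "Em \<subseteq> E" unfolding Ep_def Em_def by auto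
  have BpB: "Bp \<subseteq> B" "Bm \<subseteq> B" unfolding Bp_def Bm_def by auto
  have PW: "P \<subseteq> Wp" "M \<subseteq> Wp" unfolding P_def M_def
    using vec.span_mono[OF EpE(1)] vec.span_mono[OF EpE(2)] unfolding spE by auto
  have BW: "vec.span Bp \<subseteq> Wp" "vec.span Bm \<subseteq> Wp"
    using vec.span_mono[OF BpB(1)] vec.span_mono[OF BpB(2)] unfolding spB by auto
  have dimBp: "vec.dim (vec.span Bp) = card Bp" "vec.dim (vec.span Bm) = card Bm"
    using vec.dim_span_eq_card_independent[OF vec.independent_mono[OF indep BpB(1)]]
      vec.dim_span_eq_card_independent[OF vec.independent_mono[OF indep BpB(2)]] by auto
  have dimPM: "vec.dim P + vec.dim M = vec.dim Wp"
    using vec.dim_sums_Int[OF subP subM] PM0 sumPM by simp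
  have d1: "card Bp + vec.dim M \<le> vec.dim Wp"
  proof -
    have "x = 0" if "x \<in> vec.span Bp" "x \<in> M" for x
    proof (rule ccontr)
      assume "x \<noteq> 0"
      with posBp[OF that(1)] negM[OF that(2)] show False by simp
    qed
    then have "vec.span Bp \<inter> M = {0}" using vec.subspace_0[OF subM] vec.span_zero by blast
    then have "vec.dim {a + b | a b. a \<in> vec.span Bp \<and> b \<in> M} = card Bp + vec.dim M"
      using vec.dim_sums_Int[OF vec.subspace_span[of Bp] subM] dimBp by simp
    moreover have "{a + b | a b. a \<in> vec.span Bp \<and> b \<in> M} \<subseteq> Wp"
    proof
      fix x assume "x \<in> {a + b | a b. a \<in> vec.span Bp \<and> b \<in> M}"
      then obtain a b where "x = a + b" "a \<in> Wp" "b \<in> Wp" using BW(1) PW(2) by blast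
      then show "x \<in> Wp" using vec.subspace_add[OF subW] by simp
    qed
    then have "vec.dim {a + b | a b. a \<in> vec.span Bp \<and> b \<in> M} \<le> vec.dim Wp" by (rule vec.dim_subset)
    ultimately show ?thesis by simp
  qed
  have d2: "card Bm + vec.dim P \<le> vec.dim Wp"
  proof -
    have "x = 0" if "x \<in> vec.span Bm" "x \<in> P" for x
    proof (rule ccontr)
      assume "x \<noteq> 0"
      with negBm[OF that(1)] posP[OF that(2)] show False by simp
    qed
    then have "vec.span Bm \<inter> P = {0}" using vec.subspace_0[OF subP] vec.span_zero by blast
    then have "vec.dim {a + b | a b. a \<in> vec.span Bm \<and> b \<in> P} = card Bm + vec.dim P"
      using vec.dim_sums_Int[OF vec.subspace_span[of Bm] subP] dimBp by simp
    moreover have "{a + b | a b. a \<in> vec.span Bm \<and> b \<in> P} \<subseteq> Wp"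
    proof
      fix x assume "x \<in> {a + b | a b. a \<in> vec.span Bm \<and> b \<in> P}"
      then obtain a b where "x = a + b" "a \<in> Wp" "b \<in> Wp" using BW(2) PW(1) by blast
      then show "x \<in> Wp" using vec.subspace_add[OF subW] by simp
    qed
    then have "vec.dim {a + b | a b. a \<in> vec.span Bm \<and> b \<in> P} \<le> vec.dim Wp" by (rule vec.dim_subset)
    ultimately show ?thesis by simp
  qed
  have dP: "vec.dim P = card Bp" and dM: "vec.dim M = card Bm"
    using d1 d2 dimPM card_sum by linarith+
  define \<Phi> where "\<Phi> = (\<lambda>Wpp Wpm. vec.subspace Wpp \<and> vec.subspace Wpm
                  \<and> Wpp \<inter> Wpm = {0}
                  \<and> {a + b | a b. a \<in> Wpp \<and> b \<in> Wpm} = Wp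
                  \<and> vec.dim Wpp = card Bp \<and> vec.dim Wpm = card Bm
                  \<and> (\<forall>w\<in>Wpp. w \<noteq> 0 \<longrightarrow> sgn (sympl w w) = 1)
                  \<and> (\<forall>w\<in>Wpm. w \<noteq> 0 \<longrightarrow> sgn (sympl w w) = -1)
                  \<and> (\<forall>wp\<in>Wpp. \<forall>wm\<in>Wpm. wp \<noteq> 0 \<longrightarrow> wm \<noteq> 0 \<longrightarrow>
                        sympl wp wm = 0 \<and> cinner wp wm = 0))"
  have ex: "\<Phi> P M"
    unfolding \<Phi>_def
  proof (intro conjI subP subM PM0 sumPM dP dM ballI impI)
    show "sgn (sympl w w) = 1" if "w \<in> P" "w \<noteq> 0" for w using posP that sgn_sympl_pos by blast
    show "sgn (sympl w w) = -1" if "w \<in> M" "w \<noteq> 0" for w using negM that sgn_sympl_neg by blast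
    fix wp wm assume "wp \<in> P" "wm \<in> M"
    have ne: "e \<noteq> f" if "e \<in> Ep" "f \<in> Em" for e f using that unfolding Ep_def Em_def by auto
    show "sympl wp wm = 0"
      using sympl_span_both[of Ep Em wp wm] \<open>wp \<in> P\<close> \<open>wm \<in> M\<close> EorthS ne EpEm
      unfolding P_def M_def by blast
    show "cinner wp wm = 0"
      using cinner_span_both[of Ep Em wp wm] \<open>wp \<in> P\<close> \<open>wm \<in> M\<close> Eorth ne EpEm
      unfolding P_def M_def by blast
  qed
  have uniq: "P' = P \<and> M' = M" if "\<Phi> P' M'" for P' M'
  proof -
    from that have sP': "vec.subspace P'" and sM': "vec.subspace M'"
      and sum': "{a + b | a b. a \<in> P' \<and> b \<in> M'} = Wp"
      and dP': "vec.dim P' = card Bp" and dM': "vec.dim M' = card Bm"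
      and pos': "\<forall>w\<in>P'. w \<noteq> 0 \<longrightarrow> sgn (sympl w w) = 1"
      and neg': "\<forall>w\<in>M'. w \<noteq> 0 \<longrightarrow> sgn (sympl w w) = -1"
      and orth': "\<forall>wp\<in>P'. \<forall>wm\<in>M'. wp \<noteq> 0 \<longrightarrow> wm \<noteq> 0 \<longrightarrow> sympl wp wm = 0 \<and> cinner wp wm = 0"
      unfolding \<Phi>_def by auto
    have P'W: "P' \<subseteq> Wp"
    proof
      fix x assume "x \<in> P'"
      then have "x + 0 \<in> {a + b | a b. a \<in> P' \<and> b \<in> M'}" using vec.subspace_0[OF sM'] by blast
      then show "x \<in> Wp" using sum' by simp
    qed
    have M'W: "M' \<subseteq> Wp"
    proof
      fix x assume "x \<in> M'"
      then have "0 + x \<in> {a + b | a b. a \<in> P' \<and> b \<in> M'}" using vec.subspace_0[OF sP'] by blast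
      then show "x \<in> Wp" using sum' by simp
    qed
    have posX: "\<forall>x\<in>P'. x \<noteq> 0 \<longrightarrow> 1 * Re (sympl x x) > 0" using pos' by (simp add: sgn_sympl_pos)
    have negX: "\<forall>x\<in>M'. x \<noteq> 0 \<longrightarrow> -1 * Re (sympl x x) > 0" using neg' by (simp add: sgn_sympl_neg)
    have EmM': "Em \<subseteq> M'"
    proof
      fix e assume "e \<in> Em"
      then have eE: "e \<in> E" and eneg: "Re (sympl e e) < 0" unfolding Em_def by auto
      then have eW: "e \<in> Wp" using EW by auto
      then obtain p m where pm: "e = p + m" "p \<in> P'" "m \<in> M'" using sum' by blast
      obtain l where l: "\<forall>z\<in>Wp. sympl z e = of_real l * cinner z e" using Epen eE by blast
      have "p = 0"
        by (rule pencil_mem[of e p m P' M' Wp 1 l, OF pm P'W posX orth' l]) (use eneg Enz eE eW in auto)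
      then show "e \<in> M'" using pm by simp
    qed
    have EpP': "Ep \<subseteq> P'"
    proof
      fix e assume "e \<in> Ep"
      then have eE: "e \<in> E" and epos: "Re (sympl e e) > 0" unfolding Ep_def by auto
      then have eW: "e \<in> Wp" using EW by auto
      then obtain p m where pm: "e = p + m" "p \<in> P'" "m \<in> M'" using sum' by blast
      obtain l where l: "\<forall>z\<in>Wp. sympl z e = of_real l * cinner z e" using Epen eE by blast
      have orth'': "\<forall>x\<in>M'. \<forall>y\<in>P'. x \<noteq> 0 \<longrightarrow> y \<noteq> 0 \<longrightarrow> sympl x y = 0 \<and> cinner x y = 0"
      proof (intro ballI impI)
        fix x y assume "x \<in> M'" "y \<in> P'" "x \<noteq> 0" "y \<noteq> 0"
        then have "sympl y x = 0 \<and> cinner y x = 0" using orth' by blast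
        then show "sympl x y = 0 \<and> cinner x y = 0"
          using sympl_cnj[of y x] cinner_cnj[of y x] by simp
      qed
      have "m = 0"
        by (rule pencil_mem[of e m p M' P' Wp "-1" l, OF _ pm(3,2) M'W negX orth'' l])
           (use pm epos Enz eE eW in auto)
      then show "e \<in> P'" using pm by simp
    qed
    have "M \<subseteq> M'" unfolding M_def using EmM' sM' vec.span_minimal by blast
    then have "M = M'" using vec.subspace_dim_equal[OF subM sM'] dM dM' by simp
    moreover have "P \<subseteq> P'" unfolding P_def using EpP' sP' vec.span_minimal by blast
    then have "P = P'" using vec.subspace_dim_equal[OF subP sP'] dP dP' by simp
    ultimately show ?thesis by simp
  qed
  have "\<exists>!(Wpp, Wpm). \<Phi> Wpp Wpm"
  proof (rule ex1I[of _ "(P, M)"])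
    show "case (P, M) of (Wpp, Wpm) \<Rightarrow> \<Phi> Wpp Wpm" using ex by simp
    fix y assume "case y of (Wpp, Wpm) \<Rightarrow> \<Phi> Wpp Wpm"
    then show "y = (P, M)" using uniq by (cases y) auto
  qed
  then show ?thesis unfolding Let_def Bp_def[symmetric] Bm_def[symmetric] \<Phi>_def card_sum by simp
qed




lemma D_sym:
  assumes herm: "hermitian_mat h" and D_def: "D = tau_z ** h"
  shows "sympl (D *v x) y = sympl x (D *v y)"
proof -
  have Dv: "D *v v = tau_z *v (h *v v)" for v unfolding D_def by (simp add: matrix_vector_mul_assoc)
  have "sympl (D *v x) y = cinner (tau_z *v (h *v x)) (tau_z *v y)" unfolding sympl_def Dv ..
  also have "\<dots> = cinner (h *v x) y" by (simp add: tau_adj tau_tau)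
  also have "\<dots> = cinner x (h *v y)" by (rule herm_adj[OF herm])
  also have "\<dots> = sympl x (D *v y)" unfolding sympl_def Dv by (simp add: tau_tau)
  finally show ?thesis .
qed

lemma eig_orth:
  assumes herm: "hermitian_mat h" and D_def: "D = tau_z ** h"
    and x: "D *v x = complex_of_real a *s x" and y: "D *v y = complex_of_real b *s y" and ab: "a \<noteq> b"
  shows "sympl x y = 0"
proof -
  have "of_real a * sympl x y = of_real b * sympl x y"
    using D_sym[OF herm D_def, of x y] unfolding x y sympl_scale_left sympl_scale_right by simp
  then have "(of_real a - of_real b) * sympl x y = 0" by (simp add: algebra_simps)
  with ab show ?thesis by simp
qed

lemma nondeg:
  assumes herm: "hermitian_mat h" and D_def: "D = tau_z ** h"
    and diag: "diagonalizable_mat D"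
    and real_ev: "\<forall>l. is_eigenvalue D l \<longrightarrow> Im l = 0"
    and x: "D *v x = complex_of_real w *s x"
    and z: "\<And>z. D *v z = complex_of_real w *s z \<Longrightarrow> sympl z x = 0"
  shows "x = 0"
proof -
  obtain B0 where B0: "vec.span B0 = UNIV" "\<forall>v\<in>B0. \<exists>l. is_eigenvector D v l"
    using diag unfolding diagonalizable_mat_def by blast
  have "sympl b x = 0" if bB0: "b \<in> B0" for b
  proof -
    obtain l where l: "is_eigenvector D b l" using B0(2) bB0 by blast
    then have "is_eigenvalue D l" unfolding is_eigenvector_def is_eigenvalue_def by blast
    then have "Im l = 0" using real_ev by blast
    define r where "r = Re l"
    have lr: "l = complex_of_real r" unfolding r_def using \<open>Im l = 0\<close> by (simp add: complex_eq_iff)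
    have "D *v b = l *s b" using l unfolding is_eigenvector_def by blast
    then have Db: "D *v b = complex_of_real r *s b" unfolding lr .
    show ?thesis
    proof (cases "r = w")
      case True then show ?thesis using z Db by simp
    next
      case False then show ?thesis using eig_orth[OF herm D_def Db x] by simp
    qed
  qed
  then have "sympl z x = 0" for z
    using sympl_span_left[of B0 x z] B0(1) by blast
  then have "sympl (tau_z *v x) x = 0" .
  then have "cinner (tau_z *v x) (tau_z *v x) = 0" unfolding sympl_def .
  then have "tau_z *v x = 0" by (simp add: cinner_self_eq_0)
  then have "tau_z *v (tau_z *v x) = 0" by simp
  then show ?thesis by (simp add: tau_tau)
qed

lemma part1:
  fixes h :: "complex ^ ('n::finite + 'n) ^ ('n + 'n)"
    and D :: "complex ^ ('n + 'n) ^ ('n + 'n)"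
  assumes herm: "hermitian_mat h"
    and D_def: "D = tau_z ** h"
    and diag: "diagonalizable_mat D"
    and real_ev: "\<forall>l. is_eigenvalue D l \<longrightarrow> Im l = 0"
    and Wp_def: "Wp = vec.span {v. \<exists>\<omega>::real. \<omega> > \<omega>0 \<and> is_eigenvector D v (complex_of_real \<omega>)}"
  shows "\<exists>B. vec.independent B \<and> vec.span B = Wp
          \<and> (\<forall>b\<in>B. \<exists>\<omega>::real. \<omega> > \<omega>0 \<and> is_eigenvector D b (complex_of_real \<omega>))
          \<and> (\<forall>x\<in>B. \<forall>y\<in>B. x \<noteq> y \<longrightarrow> sympl x y = 0)
          \<and> (\<forall>b\<in>B. sympl b b \<noteq> 0)"
proof -
  define Ew where "Ew = (\<lambda>w::real. {v. D *v v = complex_of_real w *s v})"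
  have subE: "vec.subspace (Ew w)" for w
    unfolding Ew_def vec.subspace_def
    by (simp add: matrix_vector_right_distrib vec.scale algebra_simps)
  have "\<forall>w. \<exists>F. good_basis (Ew w) F" using spectral[OF subE] by blast
  then obtain F where F: "\<And>w. good_basis (Ew w) (F w)" by metis
  define B where "B = (\<Union>w\<in>{w. w > \<omega>0}. F w)"
  have FE: "b \<in> Ew w" if "b \<in> F w" for b w using F[of w] that unfolding good_basis_def by blast
  have Fnz: "b \<noteq> 0" if "b \<in> F w" for b w using F[of w] that unfolding good_basis_def by blast
  have Fsnz: "sympl b b \<noteq> 0" if bF: "b \<in> F w" for b w
  proof
    assume see: "sympl b b = 0"
    obtain l where l: "\<forall>z\<in>Ew w. sympl z b = of_real l * cinner z b"
      using F[of w] bF unfolding good_basis_def by blast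
    have bE: "b \<in> Ew w" using FE[OF bF] .
    have "b \<noteq> 0" using Fnz[OF bF] .
    then have cbb: "cinner b b \<noteq> 0" unfolding cinner_self_eq_0 .
    have "sympl b b = of_real l * cinner b b" using l bE by (rule bspec)
    then have "of_real l * cinner b b = 0" using see by simp
    then have l0: "l = 0" using cbb by simp
    have "b = 0"
    proof (rule nondeg[OF herm D_def diag real_ev, of b w])
      show "D *v b = complex_of_real w *s b" using bE unfolding Ew_def by simp
      fix z assume "D *v z = complex_of_real w *s z"
      then have zE: "z \<in> Ew w" unfolding Ew_def by simp
      have "sympl z b = of_real l * cinner z b" using l zE by (rule bspec)
      then show "sympl z b = 0" using l0 by simp
    qed
    then show False using Fnz[OF bF] by blast
  qed
  have Borth: "\<forall>x\<in>B. \<forall>y\<in>B. x \<noteq> y \<longrightarrow> sympl x y = 0"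
  proof (intro ballI impI)
    fix x y assume "x \<in> B" "y \<in> B" "x \<noteq> y"
    then obtain w w' where xF: "x \<in> F w" and yF: "y \<in> F w'" unfolding B_def by blast
    show "sympl x y = 0"
    proof (cases "w = w'")
      case True
      obtain l where l: "\<forall>z\<in>Ew w'. sympl z y = of_real l * cinner z y"
        using F[of w'] yF unfolding good_basis_def by blast
      have "cinner x y = 0" using F[of w'] xF yF True \<open>x \<noteq> y\<close> unfolding good_basis_def by blast
      moreover have "x \<in> Ew w'" using FE[OF xF] True by simp
      ultimately show ?thesis using l by simp
    next
      case False
      show ?thesis using eig_orth[OF herm D_def _ _ False, of x y] FE[OF xF] FE[OF yF]
        unfolding Ew_def by simp
    qed
  qed
  have Bsnz: "\<forall>b\<in>B. sympl b b \<noteq> 0" using Fsnz unfolding B_def by blast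
  have Beig: "\<forall>b\<in>B. \<exists>\<omega>::real. \<omega> > \<omega>0 \<and> is_eigenvector D b (complex_of_real \<omega>)"
  proof
    fix b assume "b \<in> B"
    then obtain w where w: "w > \<omega>0" "b \<in> F w" unfolding B_def by blast
    have "is_eigenvector D b (complex_of_real w)"
      using FE[OF w(2)] Fnz[OF w(2)] unfolding is_eigenvector_def Ew_def by simp
    then show "\<exists>\<omega>::real. \<omega> > \<omega>0 \<and> is_eigenvector D b (complex_of_real \<omega>)" using w(1) by blast
  qed
  have indep: "vec.independent B" by (rule sympl_orth_indep[OF Borth Bsnz])
  have "vec.span B = Wp"
  proof (rule antisym)
    have "B \<subseteq> {v. \<exists>\<omega>::real. \<omega> > \<omega>0 \<and> is_eigenvector D v (complex_of_real \<omega>)}"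
      using Beig by blast
    then show "vec.span B \<subseteq> Wp" unfolding Wp_def by (rule vec.span_mono)
    have "{v. \<exists>\<omega>::real. \<omega> > \<omega>0 \<and> is_eigenvector D v (complex_of_real \<omega>)} \<subseteq> vec.span B"
    proof
      fix v assume "v \<in> {v. \<exists>\<omega>::real. \<omega> > \<omega>0 \<and> is_eigenvector D v (complex_of_real \<omega>)}"
      then obtain w where w: "w > \<omega>0" "is_eigenvector D v (complex_of_real w)" by blast
      then have "v \<in> Ew w" unfolding Ew_def is_eigenvector_def by simp
      then have "v \<in> vec.span (F w)" using F[of w] unfolding good_basis_def by blast
      moreover have "F w \<subseteq> B" using w(1) unfolding B_def by blast
      ultimately show "v \<in> vec.span B" using vec.span_mono by blast
    qed
    then show "Wp \<subseteq> vec.span B" unfolding Wp_def by (rule vec.span_minimal) simp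
  qed
  then show ?thesis using indep Beig Borth Bsnz by blast
qed



theorem claim1:
  fixes h :: "complex ^ ('n::finite + 'n) ^ ('n + 'n)"
    and D :: "complex ^ ('n + 'n) ^ ('n + 'n)"
    and \<omega>0 :: real
    and Wp :: "(complex ^ ('n + 'n)) set"
  assumes herm: "hermitian_mat h"
    and D_def: "D = tau_z ** h"
    and diag: "diagonalizable_mat D"
    and real_ev: "\<forall>l. is_eigenvalue D l \<longrightarrow> Im l = 0"
    and w0_pos: "\<omega>0 > 0"
    and not_ev: "\<not> is_eigenvalue D (complex_of_real \<omega>0)"
                "\<not> is_eigenvalue D (complex_of_real (- \<omega>0))"
    and Wp_def: "Wp = vec.span {v. \<exists>\<omega>::real. \<omega> > \<omega>0 \<and> is_eigenvector D v (complex_of_real \<omega>)}"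
  shows
    "(\<exists>B. vec.independent B \<and> vec.span B = Wp
          \<and> (\<forall>b\<in>B. \<exists>\<omega>::real. \<omega> > \<omega>0 \<and> is_eigenvector D b (complex_of_real \<omega>))
          \<and> (\<forall>x\<in>B. \<forall>y\<in>B. x \<noteq> y \<longrightarrow> sympl x y = 0)
          \<and> (\<forall>b\<in>B. sympl b b \<noteq> 0))
     \<and>
     (\<forall>B. (vec.independent B \<and> vec.span B = Wp
           \<and> (\<forall>b\<in>B. \<exists>\<omega>::real. \<omega> > \<omega>0 \<and> is_eigenvector D b (complex_of_real \<omega>))
           \<and> (\<forall>x\<in>B. \<forall>y\<in>B. x \<noteq> y \<longrightarrow> sympl x y = 0)
           \<and> (\<forall>b\<in>B. sympl b b \<noteq> 0))
        \<longrightarrow>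
        (let Rp = card {b\<in>B. sgn (sympl b b) = 1};
             Rm = card {b\<in>B. sgn (sympl b b) = -1}
         in Rp + Rm = vec.dim Wp
            \<and> (\<exists>!(Wpp, Wpm). vec.subspace Wpp \<and> vec.subspace Wpm
                  \<and> Wpp \<inter> Wpm = {0}
                  \<and> {a + b | a b. a \<in> Wpp \<and> b \<in> Wpm} = Wp
                  \<and> vec.dim Wpp = Rp \<and> vec.dim Wpm = Rm
                  \<and> (\<forall>w\<in>Wpp. w \<noteq> 0 \<longrightarrow> sgn (sympl w w) = 1)
                  \<and> (\<forall>w\<in>Wpm. w \<noteq> 0 \<longrightarrow> sgn (sympl w w) = -1)
                  \<and> (\<forall>wp\<in>Wpp. \<forall>wm\<in>Wpm. wp \<noteq> 0 \<longrightarrow> wm \<noteq> 0 \<longrightarrow>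
                        sympl wp wm = 0 \<and> cinner wp wm = 0))))"
  proof -
  have p1: "\<exists>B. vec.independent B \<and> vec.span B = Wp
          \<and> (\<forall>b\<in>B. \<exists>\<omega>::real. \<omega> > \<omega>0 \<and> is_eigenvector D b (complex_of_real \<omega>))
          \<and> (\<forall>x\<in>B. \<forall>y\<in>B. x \<noteq> y \<longrightarrow> sympl x y = 0)
          \<and> (\<forall>b\<in>B. sympl b b \<noteq> 0)"
    by (rule part1[OF herm D_def diag real_ev Wp_def])
  show ?thesis
  proof (intro conjI allI impI)
    show "\<exists>B. vec.independent B \<and> vec.span B = Wp
          \<and> (\<forall>b\<in>B. \<exists>\<omega>::real. \<omega> > \<omega>0 \<and> is_eigenvector D b (complex_of_real \<omega>))
          \<and> (\<forall>x\<in>B. \<forall>y\<in>B. x \<noteq> y \<longrightarrow> sympl x y = 0)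
          \<and> (\<forall>b\<in>B. sympl b b \<noteq> 0)" by (rule p1)
  next
    fix B :: "(complex ^ ('n + 'n)) set"
    assume hB: "vec.independent B \<and> vec.span B = Wp
           \<and> (\<forall>b\<in>B. \<exists>\<omega>::real. \<omega> > \<omega>0 \<and> is_eigenvector D b (complex_of_real \<omega>))
           \<and> (\<forall>x\<in>B. \<forall>y\<in>B. x \<noteq> y \<longrightarrow> sympl x y = 0)
           \<and> (\<forall>b\<in>B. sympl b b \<noteq> 0)"
    then show "let Rp = card {b\<in>B. sgn (sympl b b) = 1};
             Rm = card {b\<in>B. sgn (sympl b b) = -1}
         in Rp + Rm = vec.dim Wp
            \<and> (\<exists>!(Wpp, Wpm). vec.subspace Wpp \<and> vec.subspace Wpm
                  \<and> Wpp \<inter> Wpm = {0}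
                  \<and> {a + b | a b. a \<in> Wpp \<and> b \<in> Wpm} = Wp
                  \<and> vec.dim Wpp = Rp \<and> vec.dim Wpm = Rm
                  \<and> (\<forall>w\<in>Wpp. w \<noteq> 0 \<longrightarrow> sgn (sympl w w) = 1)
                  \<and> (\<forall>w\<in>Wpm. w \<noteq> 0 \<longrightarrow> sgn (sympl w w) = -1)
                  \<and> (\<forall>wp\<in>Wpp. \<forall>wm\<in>Wpm. wp \<noteq> 0 \<longrightarrow> wm \<noteq> 0 \<longrightarrow>
                        sympl wp wm = 0 \<and> cinner wp wm = 0))"
      using part2[of B Wp] by blast
  qed
qed

end
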